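(* (Reliability of ensemble-based SpikeCP with p-variable merging.) Let $(\mathbf{x},c),(\mathbf{x}[1],c[1]),\dots,(\mathbf{x}[n],c[n])$ be i.i.d. pairs (input time series, label in $\{1,\dots,C\}$). Let $s^1,\dots,s^K$ be $K$ fixed loss functions (chosen independently of these data), $s^k_{c'}(\mathbf{x}^t)\in\mathbb{R}$. Fix a set of checkpoints $\mathcal{T}_s\subseteq\{1,\dots,T\}$ with $T\in\mathcal{T}_s$, a target accuracy $p_{\rm targ}\in(0,1)$, a set-size threshold $I_{\rm th}$, and set $\alpha=(1-p_{\rm targ})/|\mathcal{T}_s|$. For each $t\in\mathcal{T}_s$, $k$ and label $c'$ define $$p^k_{c'}(\mathbf{x}^t)=\frac{1+\sum_{i=1}^{n}\mathbb{1}\big(s^k_{c'}(\mathbf{x}^t)\le s^k_{c[i]}(\mathbf{x}^t[i])\big)}{n+1},\qquad p_{c'}(\mathbf{x}^t)=F\big(p^1_{c'}(\mathbf{x}^t),\dots,p^K_{c'}(\mathbf{x}^t)\big),$$ where $F$ is any p-merging function, and $\Gamma(\mathbf{x}^t)=\{c'\in\{1,\dots,C\}: p_{c'}(\mathbf{x}^t)>\alpha\}$. Let $T_s(\mathbf{x})=\min\{t\in\mathcal{T}_s: |\Gamma(\mathbf{x}^t)|\le I_{\rm th}\}$ if this set is nonempty and $T_s(\mathbf{x})=T$ otherwise, and output $\Gamma(\mathbf{x}):=\Gamma(\mathbf{x}^{T_s(\mathbf{x})})$. Then $\Pr\big(c\in\Gamma(\mathbf{x})\big)\ge p_{\rm targ}$,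 where the probability is over the test pair and the calibration data.
   Context: $\mathbf{x}^t=(\mathbf{x}_1,\dots,\mathbf{x}_t)$ denotes the prefix up to time $t$ of the time series $\mathbf{x}$. A function $F:[0,1]^K\to[0,\infty)$ is a p-merging function if for any random variables $P^1,\dots,P^K$ (with arbitrary dependence) each satisfying $\Pr(P^k\le\alpha')\le\alpha'$ for all $\alpha'\in(0,1)$, one has $\Pr(F(P^1,\dots,P^K)\le\alpha')\le\alpha'$ for all $\alpha'\in(0,1)$. Examples: $F(p^1,\dots,p^K)=K\min_k p^k$, $F=\max_k p^k$, and more generally $F(p^1,\dots,p^K)=a_r\big(\frac1K\sum_k (p^k)^r\big)^{1/r}$ with suitable constants $a_r$ (e.g. $a_r=K^{1/r}$ for $r\ge K-1$). In the paper the $s^k$ are log-losses of $K$ pre-trained spiking neural networks forming an ensemble (deep ensemble or samples from a variational posterior drawn independently of the data). *)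

theory Defs
  imports "HOL-Probability.Probability"
begin

text \<open>Validity is required for all random variables on probability spaces over the
  type 'w (instantiated with the sample space type in the main theorem).\<close>
definition p_merging :: "'w itself \<Rightarrow> nat \<Rightarrow> (real list \<Rightarrow> real) \<Rightarrow> bool" where
  "p_merging _ K F \<longleftrightarrow>
     (\<forall>ps. length ps = K \<and> set ps \<subseteq> {0..1} \<longrightarrow> F ps \<ge> 0) \<and>
     (\<forall>(M::'w measure) (P::nat \<Rightarrow> 'w \<Rightarrow> real).
        prob_space M \<and>
        (\<forall>k<K. P k \<in> borel_measurable M \<and> (\<forall>\<omega>\<in>space M. P k \<omega> \<in> {0..1}) \<and>
               (\<forall>a\<in>{0<..<1}. measure M {\<omega>\<in>space M. P k \<omega> \<le> a} \<le> a))
        \<longrightarrow> (\<forall>a\<in>{0<..<1}. measure M {\<omega>\<in>space M. F (map (\<lambda>k. P k \<omega>) [0..<K]) \<le> a} \<le> a))"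

text \<open>Conformal p-value of model k at checkpoint t for candidate label c'.
  s k t x c' stands for the loss s^k_{c'}(x^t); D i = (x[i], c[i]) for i = 1..n.\<close>
definition conf_pval ::
  "(nat \<Rightarrow> nat \<Rightarrow> 'a \<Rightarrow> nat \<Rightarrow> real) \<Rightarrow> nat \<Rightarrow> (nat \<Rightarrow> 'a \<times> nat) \<Rightarrow> nat \<Rightarrow> nat \<Rightarrow> 'a \<Rightarrow> nat \<Rightarrow> real" where
  "conf_pval s n D k t x c' =
     real (1 + card {i\<in>{1..n}. s k t x c' \<le> s k t (fst (D i)) (snd (D i))}) / real (n + 1)"

definition merged_pval ::
  "(real list \<Rightarrow> real) \<Rightarrow> nat \<Rightarrow> (nat \<Rightarrow> nat \<Rightarrow> 'a \<Rightarrow> nat \<Rightarrow> real) \<Rightarrow> nat \<Rightarrow> (nat \<Rightarrow> 'a \<times> nat)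
     \<Rightarrow> nat \<Rightarrow> 'a \<Rightarrow> nat \<Rightarrow> real" where
  "merged_pval F K s n D t x c' = F (map (\<lambda>k. conf_pval s n D k t x c') [0..<K])"

definition pred_set ::
  "(real list \<Rightarrow> real) \<Rightarrow> nat \<Rightarrow> (nat \<Rightarrow> nat \<Rightarrow> 'a \<Rightarrow> nat \<Rightarrow> real) \<Rightarrow> nat \<Rightarrow> (nat \<Rightarrow> 'a \<times> nat)
     \<Rightarrow> nat \<Rightarrow> real \<Rightarrow> nat \<Rightarrow> 'a \<Rightarrow> nat set" where
  "pred_set F K s n D C \<alpha> t x = {c'\<in>{1..C}. merged_pval F K s n D t x c' > \<alpha>}"

definition stop_time ::
  "(real list \<Rightarrow> real) \<Rightarrow> nat \<Rightarrow> (nat \<Rightarrow> nat \<Rightarrow> 'a \<Rightarrow> nat \<Rightarrow> real) \<Rightarrow> nat \<Rightarrow> (nat \<Rightarrow> 'a \<times> nat)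
     \<Rightarrow> nat \<Rightarrow> real \<Rightarrow> nat set \<Rightarrow> nat \<Rightarrow> nat \<Rightarrow> 'a \<Rightarrow> nat" where
  "stop_time F K s n D C \<alpha> Ts T Ith x =
     (let S = {t\<in>Ts. card (pred_set F K s n D C \<alpha> t x) \<le> Ith} in if S \<noteq> {} then Min S else T)"

definition spikecp_set ::
  "(real list \<Rightarrow> real) \<Rightarrow> nat \<Rightarrow> (nat \<Rightarrow> nat \<Rightarrow> 'a \<Rightarrow> nat \<Rightarrow> real) \<Rightarrow> nat \<Rightarrow> (nat \<Rightarrow> 'a \<times> nat)
     \<Rightarrow> nat \<Rightarrow> real \<Rightarrow> nat set \<Rightarrow> nat \<Rightarrow> nat \<Rightarrow> 'a \<Rightarrow> nat set" where
  "spikecp_set F K s n D C \<alpha> Ts T Ith x =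
     pred_set F K s n D C \<alpha> (stop_time F K s n D C \<alpha> Ts T Ith x) x"

end

theory Submission
  imports Defs "HOL-Combinatorics.Transposition"
begin

lemma count_le:
  fixes w :: "nat \<Rightarrow> real"
  assumes "finite I"
  shows "card {j\<in>I. card {i\<in>I. w j \<le> w i} \<le> m} \<le> m"
proof (cases "{j\<in>I. card {i\<in>I. w j \<le> w i} \<le> m} = {}")
  case True then show ?thesis by (metis card.empty le0)
next
  case False
  define J where "J = {j\<in>I. card {i\<in>I. w j \<le> w i} \<le> m}"
  have fJ: "finite J" using assms J_def by simp
  have "Min (w ` J) \<in> w ` J" using False fJ J_def by (intro Min_in) auto
  then obtain j0 where j0: "j0 \<in> J" "w j0 = Min (w ` J)" by auto
  have "J \<subseteq> {i\<in>I. w j0 \<le> w i}" using j0 fJ J_def by auto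
  then have "card J \<le> card {i\<in>I. w j0 \<le> w i}" using assms by (intro card_mono) auto
  also have "\<dots> \<le> m" using j0 J_def by auto
  finally show ?thesis using J_def by simp
qed

lemma conformal:
  fixes W :: "nat \<Rightarrow> 'w \<Rightarrow> real"
  assumes PS: "prob_space M" and ind: "prob_space.indep_vars M (\<lambda>_. borel) W {0..n}"
    and ident: "\<forall>i\<in>{0..n}. distr M borel (W i) = distr M borel (W 0)" and a: "0 \<le> a"
  shows "measure M {\<omega>\<in>space M. real (1 + card {i\<in>{1..n}. W 0 \<omega> \<le> W i \<omega>}) / real (n+1) \<le> a} \<le> a"
proof -
  interpret prob_space M by fact
  define I where "I = {0..n}"
  have rv: "\<And>i. i \<in> I \<Longrightarrow> W i \<in> borel_measurable M"
    using ind unfolding indep_vars_def2 I_def by auto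
  define N where "N = distr M borel (W 0)"
  have PN: "prob_space N" unfolding N_def using rv I_def by (intro prob_space_distr) auto
  define P where "P = PiM I (\<lambda>_. N)"
  have PP: "prob_space P" unfolding P_def using PN by (intro prob_space_PiM) auto
  have setsN: "sets N = sets borel" unfolding N_def by simp
  have setsP: "sets P = sets (PiM I (\<lambda>_. borel))" unfolding P_def using setsN by (intro sets_PiM_cong) auto
  have spP: "space P = space (PiM I (\<lambda>_. borel))" using setsP by (rule sets_eq_imp_space_eq)
  define X where "X = (\<lambda>\<omega>. \<lambda>i\<in>I. W i \<omega>)"
  have Xm: "X \<in> measurable M (PiM I (\<lambda>_. borel))" unfolding X_def using rv by measurable
  have joint: "distr M (PiM I (\<lambda>_. borel)) X = P"
  proof -
    have "distr M (PiM I (\<lambda>_. borel)) X = PiM I (\<lambda>i. distr M borel (W i))"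
    proof -
      have ne: "I \<noteq> {}" unfolding I_def by simp
      have ind': "indep_vars (\<lambda>_. borel) W I" using ind I_def by simp
      show ?thesis unfolding X_def
        by (rule iffD1[OF indep_vars_iff_distr_eq_PiM'[where I=I and M'="\<lambda>_. borel" and X=W, OF ne rv] ind'])
    qed
    also have "\<dots> = P" unfolding P_def N_def
    proof (rule PiM_cong)
      fix i assume "i \<in> I" then show "distr M borel (W i) = distr M borel (W 0)"
        using ident unfolding I_def by blast
    qed simp
    finally show ?thesis .
  qed
  define c where "c = a * real (n+1)"
  define cnt where "cnt = (\<lambda>j (w::nat\<Rightarrow>real). card {i\<in>I. w j \<le> w i})"
  define E where "E = (\<lambda>j. {w \<in> space P. real (cnt j w) \<le> c})"
  have cnt_sum: "real (cnt j w) = (\<Sum>i\<in>I. if w j \<le> w i then 1 else 0)" for j w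
    unfolding cnt_def using I_def by (simp add: sum.inter_filter[symmetric])
  have Esets: "E j \<in> sets P" if "j \<in> I" for j
  proof -
    have "{w \<in> space (PiM I (\<lambda>_. borel)). (\<Sum>i\<in>I. if (w::nat\<Rightarrow>real) j \<le> w i then 1 else 0::real) \<le> c} \<in> sets (PiM I (\<lambda>_. borel))"
      using that by measurable
    then show ?thesis unfolding E_def spP setsP cnt_sum .
  qed
  have event: "{\<omega>\<in>space M. real (1 + card {i\<in>{1..n}. W 0 \<omega> \<le> W i \<omega>}) / real (n+1) \<le> a}
      = X -` E 0 \<inter> space M"
  proof -
    have "{i\<in>I. W 0 \<omega> \<le> W i \<omega>} = insert 0 {i\<in>{1..n}. W 0 \<omega> \<le> W i \<omega>}" for \<omega>
      unfolding I_def by auto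
    then have "card {i\<in>I. W 0 \<omega> \<le> W i \<omega>} = 1 + card {i\<in>{1..n}. W 0 \<omega> \<le> W i \<omega>}" for \<omega>
      by simp
    moreover have "X \<omega> \<in> space P" if "\<omega> \<in> space M" for \<omega>
      using measurable_space[OF Xm that] spP by simp
    moreover have "\<And>i. i \<in> I \<Longrightarrow> X \<omega> i = W i \<omega>" for \<omega> unfolding X_def by simp
    moreover have "0 \<in> I" unfolding I_def by simp
    ultimately show ?thesis unfolding E_def cnt_def c_def
      by (auto simp: divide_le_eq algebra_simps cong: conj_cong)
  qed
  have m0: "measure M (X -` E 0 \<inter> space M) = measure P (E 0)"
    using measure_distr[OF Xm, of "E 0"] joint Esets[of 0] setsP I_def by simp
  have swap: "measure P (E j) = measure P (E 0)" if j: "j \<in> I" for j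
  proof -
    define \<tau> where "\<tau> = Transposition.transpose 0 j"
    define \<rho> where "\<rho> = (\<lambda>w::nat\<Rightarrow>real. \<lambda>i\<in>I. w (\<tau> i))"
    have I0: "0 \<in> I" unfolding I_def by simp
    have tI: "\<tau> \<in> I \<rightarrow> I" unfolding \<tau>_def using j I0 by (auto simp: Transposition.transpose_def)
    have inj: "inj_on \<tau> I" unfolding \<tau>_def by (auto simp: inj_on_def intro: transpose_eq_imp_eq)
    have d: "distr P P \<rho> = P"
      using distr_PiM_reindex[of I "\<lambda>_. N" \<tau> I] PN tI inj unfolding P_def \<rho>_def by simp
    have \<rho>m: "\<rho> \<in> measurable P P"
    proof -
      have "distr P P \<rho> = P" by (fact d)
      show ?thesis unfolding \<rho>_def P_def using tI
        by (intro measurable_restrict) (auto intro!: measurable_component_singleton)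
    qed
    have "measure P (E j) = measure (distr P P \<rho>) (E j)" using d by simp
    also have "\<dots> = measure P (\<rho> -` E j \<inter> space P)" by (rule measure_distr[OF \<rho>m Esets[OF j]])
    also have "\<rho> -` E j \<inter> space P = E 0"
    proof -
      have "cnt j (\<rho> w) = cnt 0 w" for w
      proof -
        have "{i\<in>I. \<rho> w j \<le> \<rho> w i} = \<tau> ` {i\<in>I. w 0 \<le> w i}"
        proof -
          have "\<rho> w j = w 0" unfolding \<rho>_def \<tau>_def using j by simp
          moreover have "\<And>i. i \<in> I \<Longrightarrow> \<rho> w i = w (\<tau> i)" unfolding \<rho>_def by simp
          moreover have "\<And>i. \<tau> (\<tau> i) = i" unfolding \<tau>_def by simp
          ultimately show ?thesis using tI
            by (auto simp: image_iff Pi_iff) (metis)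
        qed
        then show ?thesis unfolding cnt_def
          using inj by (simp add: card_image inj_on_subset[OF inj])
      qed
      then show ?thesis unfolding E_def using measurable_space[OF \<rho>m] by auto
    qed
    finally show ?thesis .
  qed
  have bound: "(\<Sum>j\<in>I. indicator (E j) w) \<le> c" if "w \<in> space P" for w
  proof -
    have "(\<Sum>j\<in>I. indicator (E j) w) = (\<Sum>j\<in>I. if real (cnt j w) \<le> c then 1 else 0::real)"
      using that unfolding E_def by (intro sum.cong) (auto simp: indicator_def)
    also have "\<dots> = real (card {j\<in>I. real (cnt j w) \<le> c})"
      using I_def by (simp add: sum.inter_filter[symmetric])
    also have "card {j\<in>I. real (cnt j w) \<le> c} \<le> card {j\<in>I. cnt j w \<le> nat \<lfloor>c\<rfloor>}"
      using I_def by (intro card_mono) (auto simp: le_nat_floor)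
    also have "\<dots> \<le> nat \<lfloor>c\<rfloor>" unfolding cnt_def using I_def by (intro count_le) auto
    finally have "(\<Sum>j\<in>I. indicator (E j) w) \<le> real (nat \<lfloor>c\<rfloor>)" by simp
    also have "\<dots> \<le> c"
    proof -
      have c0: "0 \<le> c" using a c_def by simp
      then have "real (nat \<lfloor>c\<rfloor>) = real_of_int \<lfloor>c\<rfloor>" by simp
      also have "\<dots> \<le> c" by (rule of_int_floor_le)
      finally show ?thesis .
    qed
    finally show ?thesis .
  qed
  interpret P: prob_space P by fact
  have intj: "integrable P (indicator (E j) :: _ \<Rightarrow> real)" if "j \<in> I" for j
    using Esets[OF that] by (simp add: integrable_indicator_iff sets.Int_space_eq2 P.emeasure_eq_measure)
  have "(\<integral>w. (\<Sum>j\<in>I. indicator (E j) w :: real) \<partial>P) = (\<Sum>j\<in>I. (\<integral>w. indicator (E j) w \<partial>P))"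
    by (rule Bochner_Integration.integral_sum) (rule intj)
  also have "\<dots> = (\<Sum>j\<in>I. measure P (E j))"
    using Esets by (intro sum.cong) (auto simp: sets.Int_space_eq2)
  finally have eqs: "(\<Sum>j\<in>I. measure P (E j)) = (\<integral>w. (\<Sum>j\<in>I. indicator (E j) w :: real) \<partial>P)" by simp
  have "(\<Sum>j\<in>I. measure P (E j)) \<le> (\<integral>w. c \<partial>P)"
  proof -
    have "integrable P (\<lambda>w. \<Sum>j\<in>I. indicator (E j) w :: real)"
      by (rule Bochner_Integration.integrable_sum) (rule intj)
    then show ?thesis unfolding eqs using bound by (intro integral_mono) auto
  qed
  also have "\<dots> = c" by (simp add: P.prob_space)
  finally have le: "(\<Sum>j\<in>I. measure P (E j)) \<le> c" .
  have "(\<Sum>j\<in>I. measure P (E j)) = (\<Sum>j\<in>I. measure P (E 0))"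
    by (rule sum.cong) (simp_all only: swap)
  also have "\<dots> = real (n+1) * measure P (E 0)" unfolding I_def by simp
  finally have "real (n+1) * measure P (E 0) \<le> c" using le by simp
  then have "measure P (E 0) \<le> a" unfolding c_def by (simp add: mult.commute)
  then show ?thesis using event m0 by simp
qed

theorem mainTheorem2:
  fixes M :: "'w measure" and S :: "'a measure"
    and Z :: "nat \<Rightarrow> 'w \<Rightarrow> 'a \<times> nat"
    and s :: "nat \<Rightarrow> nat \<Rightarrow> 'a \<Rightarrow> nat \<Rightarrow> real"
    and F :: "real list \<Rightarrow> real"
    and n K C T Ith :: nat and Ts :: "nat set" and ptarg :: real
  assumes "prob_space M"
    and indep: "prob_space.indep_vars M (\<lambda>_. S \<Otimes>\<^sub>M count_space UNIV) Z {0..n}"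
    and ident: "\<forall>i\<in>{0..n}. distr M (S \<Otimes>\<^sub>M count_space UNIV) (Z i) = distr M (S \<Otimes>\<^sub>M count_space UNIV) (Z 0)"
    and labels: "\<forall>i\<in>{0..n}. \<forall>\<omega>\<in>space M. snd (Z i \<omega>) \<in> {1..C}"
    and s_meas: "\<forall>k t c'. (\<lambda>x. s k t x c') \<in> borel_measurable S"
    and Ts: "Ts \<subseteq> {1..T}" "T \<in> Ts"
    and ptarg: "0 < ptarg" "ptarg < 1"
    and F: "p_merging TYPE('w) K F"
  shows "measure M {\<omega>\<in>space M. snd (Z 0 \<omega>) \<in>
            spikecp_set F K s n (\<lambda>i. Z i \<omega>) C ((1 - ptarg) / real (card Ts)) Ts T Ith (fst (Z 0 \<omega>))}
         \<ge> ptarg"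

proof -
  interpret prob_space M by fact
  define \<alpha> where "\<alpha> = (1 - ptarg) / real (card Ts)"
  have finTs: "finite Ts" using Ts(1) finite_subset by blast
  have cTs: "0 < card Ts" using finTs Ts(2) card_gt_0_iff by blast
  have a0: "0 < \<alpha>" unfolding \<alpha>_def using cTs ptarg by simp
  have a1: "\<alpha> < 1"
  proof -
    have "\<alpha> \<le> 1 - ptarg" unfolding \<alpha>_def using cTs ptarg
      by (simp add: divide_le_eq)
    then show ?thesis using ptarg by simp
  qed
  have Zm: "Z i \<in> measurable M (S \<Otimes>\<^sub>M count_space UNIV)" if "i \<le> n" for i
    using indep that unfolding indep_vars_def2 by auto
  have gm: "(\<lambda>p. s k t (fst p) (snd p)) \<in> borel_measurable (S \<Otimes>\<^sub>M count_space UNIV)" for k t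
  proof -
    have "(\<lambda>p. (\<lambda>c p. s k t (fst p) c) (snd p) p) \<in> borel_measurable (S \<Otimes>\<^sub>M count_space UNIV)"
    proof (rule measurable_compose_countable)
      fix c :: nat
      show "(\<lambda>p. s k t (fst p) c) \<in> borel_measurable (S \<Otimes>\<^sub>M count_space UNIV)"
        by (rule measurable_compose[OF measurable_fst]) (use s_meas in simp)
    qed (rule measurable_snd)
    then show ?thesis by simp
  qed
  define W where "W = (\<lambda>k t i \<omega>. s k t (fst (Z i \<omega>)) (snd (Z i \<omega>)))"
  have Wm: "W k t i \<in> borel_measurable M" if "i \<le> n" for k t i
    unfolding W_def using measurable_compose[OF Zm[OF that] gm] by simp
  have x0m: "(\<lambda>\<omega>. s k t (fst (Z 0 \<omega>)) c') \<in> borel_measurable M" for k t c'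
    using measurable_compose[OF measurable_compose[OF Zm[of 0] measurable_fst] s_meas[rule_format]] by simp
  have cm: "(\<lambda>\<omega>. snd (Z 0 \<omega>)) \<in> measurable M (count_space UNIV)"
    using measurable_compose[OF Zm[of 0] measurable_snd] by simp
  define q where "q = (\<lambda>k t c' \<omega>. conf_pval s n (\<lambda>i. Z i \<omega>) k t (fst (Z 0 \<omega>)) c')"
  have q_alt: "q k t c' \<omega> = ((\<Sum>i\<in>{1..n}. if s k t (fst (Z 0 \<omega>)) c' \<le> W k t i \<omega> then 1 else 0) + 1) / real (n+1)"
    for k t c' \<omega>
    unfolding q_def conf_pval_def W_def by (simp add: sum.inter_filter[symmetric] add.commute)
  have qm: "q k t c' \<in> borel_measurable M" for k t c'
  proof -
    have "(\<lambda>\<omega>. (\<Sum>i\<in>{1..n}. if s k t (fst (Z 0 \<omega>)) c' \<le> W k t i \<omega> then 1 else 0::real)) \<in> borel_measurable M"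
    proof (rule borel_measurable_sum)
      fix i assume "i \<in> {1..n}"
      then have [measurable]: "W k t i \<in> borel_measurable M" using Wm by simp
      note [measurable] = x0m
      show "(\<lambda>\<omega>. if s k t (fst (Z 0 \<omega>)) c' \<le> W k t i \<omega> then 1 else 0::real) \<in> borel_measurable M"
        by measurable
    qed
    then show ?thesis unfolding q_alt[abs_def] by measurable
  qed
  define Vals where "Vals = (\<lambda>j. real j / real (n+1)) ` {..n+1}"
  have qV: "q k t c' \<omega> \<in> Vals" for k t c' \<omega>
  proof -
    have "card {i\<in>{1..n}. s k t (fst (Z 0 \<omega>)) c' \<le> s k t (fst (Z i \<omega>)) (snd (Z i \<omega>))} \<le> card {1..n}"
      by (intro card_mono) auto
    then show ?thesis unfolding q_def conf_pval_def Vals_def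
      by (intro image_eqI[where x="1 + card {i\<in>{1..n}. s k t (fst (Z 0 \<omega>)) c' \<le> s k t (fst (Z i \<omega>)) (snd (Z i \<omega>))}"]) auto
  qed
  have q01: "0 \<le> q k t c' \<omega> \<and> q k t c' \<omega> \<le> 1" for k t c' \<omega>
    using qV[of k t c' \<omega>] unfolding Vals_def by (auto simp: divide_le_eq)
  have valid: "measure M {\<omega>\<in>space M. q k t (snd (Z 0 \<omega>)) \<omega> \<le> a} \<le> a" if "0 \<le> a" for k t a
  proof -
    have ind: "indep_vars (\<lambda>_. borel) (W k t) {0..n}"
      unfolding W_def
      using indep_vars_compose2[OF indep, of "\<lambda>_ p. s k t (fst p) (snd p)" "\<lambda>_. borel"] gm by simp
    have id: "\<forall>i\<in>{0..n}. distr M borel (W k t i) = distr M borel (W k t 0)"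
    proof
      fix i assume i: "i \<in> {0..n}"
      have "distr M borel (W k t i) = distr (distr M (S \<Otimes>\<^sub>M count_space UNIV) (Z i)) borel (\<lambda>p. s k t (fst p) (snd p))"
        using distr_distr[OF gm Zm, of i] i unfolding W_def by (simp add: comp_def)
      also have "\<dots> = distr (distr M (S \<Otimes>\<^sub>M count_space UNIV) (Z 0)) borel (\<lambda>p. s k t (fst p) (snd p))"
        by (subst bspec[OF ident i]) (rule refl)
      also have "\<dots> = distr M borel (W k t 0)"
        using distr_distr[OF gm Zm, of 0] unfolding W_def by (simp add: comp_def)
      finally show "distr M borel (W k t i) = distr M borel (W k t 0)" .
    qed
    have "{\<omega>\<in>space M. q k t (snd (Z 0 \<omega>)) \<omega> \<le> a} =
          {\<omega>\<in>space M. real (1 + card {i\<in>{1..n}. W k t 0 \<omega> \<le> W k t i \<omega>}) / real (n+1) \<le> a}"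
      unfolding q_def conf_pval_def W_def by simp
    also have "measure M \<dots> \<le> a"
      by (rule conformal[OF \<open>prob_space M\<close> ind id that])
    finally show ?thesis .
  qed
  define bad where "bad = (\<lambda>t. {\<omega>\<in>space M. F (map (\<lambda>k. q k t (snd (Z 0 \<omega>)) \<omega>) [0..<K]) \<le> \<alpha>})"
  have badm: "measure M (bad t) \<le> \<alpha>" for t
  proof -
    have F2: "\<forall>(M::'w measure) (P::nat \<Rightarrow> 'w \<Rightarrow> real).
        prob_space M \<and>
        (\<forall>k<K. P k \<in> borel_measurable M \<and> (\<forall>\<omega>\<in>space M. P k \<omega> \<in> {0..1}) \<and>
               (\<forall>a\<in>{0<..<1}. measure M {\<omega>\<in>space M. P k \<omega> \<le> a} \<le> a))
        \<longrightarrow> (\<forall>a\<in>{0<..<1}. measure M {\<omega>\<in>space M. F (map (\<lambda>k. P k \<omega>) [0..<K]) \<le> a} \<le> a)"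
      using F unfolding p_merging_def by blast
    have Pm: "(\<lambda>\<omega>. q k t (snd (Z 0 \<omega>)) \<omega>) \<in> borel_measurable M" for k
    proof -
      have "(\<lambda>\<omega>. (\<lambda>c \<omega>. q k t c \<omega>) (snd (Z 0 \<omega>)) \<omega>) \<in> borel_measurable M"
        by (rule measurable_compose_countable[OF qm cm])
      then show ?thesis by simp
    qed
    have "\<forall>a\<in>{0<..<1}. measure M {\<omega>\<in>space M. F (map (\<lambda>k. (\<lambda>k \<omega>. q k t (snd (Z 0 \<omega>)) \<omega>) k \<omega>) [0..<K]) \<le> a} \<le> a"
      using F2[rule_format, of M "\<lambda>k \<omega>. q k t (snd (Z 0 \<omega>)) \<omega>"] \<open>prob_space M\<close> Pm q01 valid by auto
    then show ?thesis unfolding bad_def using a0 a1 by auto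
  qed
  define Dom where "Dom = {..T} \<times> {..C} \<times> {..<K}"
  define V where "V = (\<lambda>\<omega>. (snd (Z 0 \<omega>), restrict (\<lambda>(t,c',k). q k t c' \<omega>) Dom))"
  define A where "A = {1..C} \<times> PiE Dom (\<lambda>_. Vals)"
  have finA: "finite A" unfolding A_def Dom_def Vals_def by (intro finite_cartesian_product finite_PiE) auto
  have VA: "V \<omega> \<in> A" if "\<omega> \<in> space M" for \<omega>
    using labels that qV unfolding V_def A_def by auto
  have Vsets: "{\<omega>\<in>space M. V \<omega> = a} \<in> sets M" if "a \<in> A" for a
  proof -
    obtain c0 h where a: "a = (c0, h)" by (cases a)
    have h: "h \<in> extensional Dom" using that a unfolding A_def by (auto simp: PiE_def)
    have "{\<omega>\<in>space M. V \<omega> = a} = {\<omega>\<in>space M. snd (Z 0 \<omega>) = c0 \<and> (\<forall>d\<in>Dom. q (snd (snd d)) (fst d) (fst (snd d)) \<omega> = h d)}"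
      unfolding V_def a using h by (auto simp: fun_eq_iff extensional_def split: prod.splits)
    also have "\<dots> \<in> sets M"
    proof -
      have fD: "finite Dom" unfolding Dom_def by auto
      note [measurable] = cm qm
      show ?thesis using fD by measurable
    qed
    finally show ?thesis .
  qed
  have fin_sets: "{\<omega>\<in>space M. g (V \<omega>)} \<in> sets M" for g
  proof -
    have "{\<omega>\<in>space M. g (V \<omega>)} = (\<Union>a\<in>{a\<in>A. g a}. {\<omega>\<in>space M. V \<omega> = a})" using VA by auto
    also have "\<dots> \<in> sets M" using finA Vsets by (intro sets.finite_UN) auto
    finally show ?thesis .
  qed
  have Vq: "snd (V \<omega>) (t, c', k) = q k t c' \<omega>" if "t \<le> T" "c' \<le> C" "k < K" for \<omega> t c' k
    using that unfolding V_def Dom_def by simp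
  have bad_sets: "bad t \<in> sets M" if "t \<le> T" for t
  proof -
    have "bad t = {\<omega>\<in>space M. F (map (\<lambda>k. snd (V \<omega>) (t, fst (V \<omega>), k)) [0..<K]) \<le> \<alpha>}"
      unfolding bad_def
    proof (intro Collect_cong conj_cong refl)
      fix \<omega> assume "\<omega> \<in> space M"
      then have "snd (Z 0 \<omega>) \<le> C" using labels by auto
      then have eqm: "map (\<lambda>k. snd (V \<omega>) (t, fst (V \<omega>), k)) [0..<K] = map (\<lambda>k. q k t (snd (Z 0 \<omega>)) \<omega>) [0..<K]"
        using Vq that by (intro map_cong) (auto simp: V_def)
      then show "(F (map (\<lambda>k. q k t (snd (Z 0 \<omega>)) \<omega>) [0..<K]) \<le> \<alpha>) = (F (map (\<lambda>k. snd (V \<omega>) (t, fst (V \<omega>), k)) [0..<K]) \<le> \<alpha>)"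
        by (simp only: eqm)
    qed
    also have "\<dots> \<in> sets M" by (rule fin_sets)
    finally show ?thesis .
  qed
  define PQ where "PQ = (\<lambda>(h::nat\<times>nat\<times>nat\<Rightarrow>real) (t::nat). {c'\<in>{1..C}. \<alpha> < F (map (\<lambda>k. h (t,c',k)) [0..<K])})"
  define SQ where "SQ = (\<lambda>h. let S' = {t\<in>Ts. card (PQ h t) \<le> Ith} in if S' \<noteq> {} then Min S' else T)"
  have SQ_Ts: "SQ h \<in> Ts" for h
  proof (cases "{t\<in>Ts. card (PQ h t) \<le> Ith} = {}")
    case True then show ?thesis unfolding SQ_def using Ts(2) by (simp add: Let_def)
  next
    case False
    then have "Min {t\<in>Ts. card (PQ h t) \<le> Ith} \<in> {t\<in>Ts. card (PQ h t) \<le> Ith}"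
      using finTs by (intro Min_in) auto
    then show ?thesis unfolding SQ_def using False by (simp add: Let_def)
  qed
  have key: "pred_set F K s n (\<lambda>i. Z i \<omega>) C \<alpha> t (fst (Z 0 \<omega>)) = PQ (snd (V \<omega>)) t" if "t \<le> T" for \<omega> t
    unfolding pred_set_def PQ_def merged_pval_def
  proof (intro Collect_cong conj_cong refl)
    fix c' assume "c' \<in> {1..C}"
    then have eqm: "map (\<lambda>k. snd (V \<omega>) (t, c', k)) [0..<K] = map (\<lambda>k. conf_pval s n (\<lambda>i. Z i \<omega>) k t (fst (Z 0 \<omega>)) c') [0..<K]"
      using Vq that by (intro map_cong) (auto simp: q_def)
    then show "(\<alpha> < F (map (\<lambda>k. conf_pval s n (\<lambda>i. Z i \<omega>) k t (fst (Z 0 \<omega>)) c') [0..<K])) =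
               (\<alpha> < F (map (\<lambda>k. snd (V \<omega>) (t, c', k)) [0..<K]))" by (simp only: eqm)
  qed
  have stop: "stop_time F K s n (\<lambda>i. Z i \<omega>) C \<alpha> Ts T Ith (fst (Z 0 \<omega>)) = SQ (snd (V \<omega>))" for \<omega>
  proof -
    have "{t\<in>Ts. card (pred_set F K s n (\<lambda>i. Z i \<omega>) C \<alpha> t (fst (Z 0 \<omega>))) \<le> Ith} = {t\<in>Ts. card (PQ (snd (V \<omega>)) t) \<le> Ith}"
      using key Ts(1) by auto
    then show ?thesis unfolding stop_time_def SQ_def by simp
  qed
  have spk: "spikecp_set F K s n (\<lambda>i. Z i \<omega>) C \<alpha> Ts T Ith (fst (Z 0 \<omega>)) = PQ (snd (V \<omega>)) (SQ (snd (V \<omega>)))" for \<omega>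
  proof -
    have "SQ (snd (V \<omega>)) \<le> T" using SQ_Ts Ts(1) by fastforce
    then show ?thesis unfolding spikecp_set_def stop by (rule key)
  qed
  define E where "E = {\<omega>\<in>space M. snd (Z 0 \<omega>) \<in> spikecp_set F K s n (\<lambda>i. Z i \<omega>) C \<alpha> Ts T Ith (fst (Z 0 \<omega>))}"
  have E_sets: "E \<in> sets M"
  proof -
    have "E = {\<omega>\<in>space M. fst (V \<omega>) \<in> PQ (snd (V \<omega>)) (SQ (snd (V \<omega>)))}"
      unfolding E_def spk by (simp add: V_def)
    also have "\<dots> \<in> sets M" by (rule fin_sets)
    finally show ?thesis .
  qed
  have sub: "space M - E \<subseteq> (\<Union>t\<in>Ts. bad t)"
  proof
    fix \<omega> assume w: "\<omega> \<in> space M - E"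
    define t0 where "t0 = SQ (snd (V \<omega>))"
    have t0: "t0 \<in> Ts" unfolding t0_def by (rule SQ_Ts)
    then have t0T: "t0 \<le> T" using Ts(1) by auto
    have c: "snd (Z 0 \<omega>) \<in> {1..C}" using labels w by auto
    have "snd (Z 0 \<omega>) \<notin> PQ (snd (V \<omega>)) t0" using w unfolding E_def spk t0_def by auto
    then have "\<not> \<alpha> < F (map (\<lambda>k. snd (V \<omega>) (t0, snd (Z 0 \<omega>), k)) [0..<K])"
      using c unfolding PQ_def by auto
    moreover have "map (\<lambda>k. snd (V \<omega>) (t0, snd (Z 0 \<omega>), k)) [0..<K] = map (\<lambda>k. q k t0 (snd (Z 0 \<omega>)) \<omega>) [0..<K]"
      using Vq t0T c by (intro map_cong) auto
    ultimately have "\<omega> \<in> bad t0" using w unfolding bad_def by auto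
    then show "\<omega> \<in> (\<Union>t\<in>Ts. bad t)" using t0 by auto
  qed
  have "measure M (space M - E) \<le> measure M (\<Union>t\<in>Ts. bad t)"
    using sub bad_sets Ts(1) finTs by (intro finite_measure_mono) (auto intro!: sets.finite_UN)
  also have "\<dots> \<le> (\<Sum>t\<in>Ts. measure M (bad t))"
    using bad_sets Ts(1) finTs by (intro measure_UNION_le) auto
  also have "\<dots> \<le> (\<Sum>t\<in>Ts. \<alpha>)" using badm by (intro sum_mono) auto
  also have "\<dots> = 1 - ptarg" unfolding \<alpha>_def using cTs by simp
  finally have "measure M (space M - E) \<le> 1 - ptarg" .
  then have "ptarg \<le> measure M E" using prob_compl[OF E_sets] by simp
  then show ?thesis unfolding E_def \<alpha>_def .
qed

end
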